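(* Let $\mathcal C$ be a Markov category with conditionals and precise supports, and $o:I\to X$ a deterministic state. Then in $\mathrm{Cond}(\mathcal C)$ the conditioning effect $(:=o)=(X,\mathrm{id}_X,o):X\leadsto I$ satisfies $(:=o)\bullet\big((:=o)\otimes \mathrm{Id}_X\big)\bullet J(\mathrm{copy}_X)=(:=o)$; i.e. $(x:=o);(x:=o)\approx(x:=o)$, so the effect $(:=o)$ is copyable.
   Context: A Markov category is a symmetric monoidal category $(\mathcal C,\otimes,I)$ (assumed strict) in which every object $X$ carries a commutative comonoid $\mathrm{copy}_X$, $\mathrm{del}_X$ compatible with $\otimes$, and $I$ is terminal. A morphism $f$ is deterministic if $\mathrm{copy}_Y f=(f\otimes f)\mathrm{copy}_X$. $\langle f,g\rangle=(f\otimes g)\mathrm{copy}_A$; marginals $f_X=(\mathrm{id}_X\otimes\mathrm{del}_Y)f$, $f_Y=(\mathrm{del}_X\otimes\mathrm{id}_Y)f$. A conditional of $f:A\to X\otimes Y$ w.r.t. $X$ is $f|_X:X\otimes A\to Y$ with $f=(\mathrm{id}_X\otimes f|_X)(\mathrm{copy}_X\otimes\mathrm{id}_A)(f_X\otimes\mathrm{id}_A)\mathrm{copy}_A$ (symmetrically w.r.t. $Y$); $\mathcal C$ has conditionals if these always exist. $f=_\mu g$ means $\langle\mathrm{id},f\rangle\mu=\langle\mathrm{id},g\rangle\mu$; $\mu\ll\nu$ means $f=_\nu g\Rightarrow f=_\mu g$ for all $f,g$. Precise supports: for deterministic $x:I\to X$, $y:I\to Y$, any $f:X\to Y$, $\mu:I\to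 X$: $x\otimes y\ll\langle\mathrm{id}_X,f\rangle\mu$ iff ($x\ll\mu$ and $y\ll fx$). $\mathrm{Obs}(\mathcal C)$: same objects as $\mathcal C$; morphisms $X\leadsto Y$ are triples $(K,f,o)$, $f:X\to Y\otimes K$, $o:I\to K$ deterministic; identity $\mathrm{Id}_X=(I,\mathrm{id}_X,\mathrm{id}_I)$; composition $(K',f',o')\bullet(K,f,o)=(K'\otimes K,(f'\otimes\mathrm{id}_K)f,o'\otimes o)$; tensor of $(K,f,o):X\leadsto Y$, $(K',f',o'):X'\leadsto Y'$ is $(K'\otimes K,(\mathrm{id}_{Y'}\otimes\mathrm{swap}_{K',Y}\otimes\mathrm{id}_K)(f'\otimes f),o'\otimes o)$; $J(f)=(I,f,\mathrm{id}_I)$. For states $(K,\psi,o),(K',\psi',o'):I\leadsto X$, $(K,\psi,o)\sim(K',\psi',o')$ iff either ($o\ll\psi_K$, $o'\ll\psi'_{K'}$ and $\psi|_Ko=\psi'|_{K'}o'$, $\psi|_K:K\to X$ a conditional w.r.t. $K$) or ($o\not\ll\psi_K$ and $o'\not\ll\psi'_{K'}$). For $F,G:X\leadsto Y$, $F\approx G$ iff for every $A$ and every state $\Psi:I\leadsto A\otimes X$, $(\mathrm{Id}_A\otimes F)\bullet\Psi\sim(\mathrm{Id}_A\otimes G)\bullet\Psi$. $\mathrm{Cond}(\mathcal C)=\mathrm{Obs}(\mathcal C)/{\approx}$. *)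

theory Defs
  imports Main
begin

text \<open>A (small, possibly large-carrier) category given by an object set, hom-sets,
composition (cmp g f = g after f), identities; a strict monoidal structure
(otens on objects, mtens on morphisms, unit object unito); a symmetry swp;
and copy (cpy) / delete (dl) maps.\<close>

record ('o, 'm) mcat =
  Ob :: "'o set"
  Hom :: "'o \<Rightarrow> 'o \<Rightarrow> 'm set"
  cmp :: "'m \<Rightarrow> 'm \<Rightarrow> 'm"
  idm :: "'o \<Rightarrow> 'm"
  otens :: "'o \<Rightarrow> 'o \<Rightarrow> 'o"
  mtens :: "'m \<Rightarrow> 'm \<Rightarrow> 'm"
  unito :: "'o"
  swp :: "'o \<Rightarrow> 'o \<Rightarrow> 'm"
  cpy :: "'o \<Rightarrow> 'm"
  dl :: "'o \<Rightarrow> 'm"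

definition category_ax :: "('o, 'm, 'z) mcat_scheme \<Rightarrow> bool" where
  "category_ax M \<longleftrightarrow>
     (\<forall>A B f. f \<in> Hom M A B \<longrightarrow> A \<in> Ob M \<and> B \<in> Ob M)
   \<and> (\<forall>A B A' B' f. f \<in> Hom M A B \<longrightarrow> f \<in> Hom M A' B' \<longrightarrow> A = A' \<and> B = B')
   \<and> (\<forall>A \<in> Ob M. idm M A \<in> Hom M A A)
   \<and> (\<forall>A B D f g. f \<in> Hom M A B \<longrightarrow> g \<in> Hom M B D \<longrightarrow> cmp M g f \<in> Hom M A D)
   \<and> (\<forall>A B f. f \<in> Hom M A B \<longrightarrow> cmp M (idm M B) f = f \<and> cmp M f (idm M A) = f)
   \<and> (\<forall>A B D E f g h. f \<in> Hom M A B \<longrightarrow> g \<in> Hom M B D \<longrightarrow> h \<in> Hom M D E \<longrightarrow>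
        cmp M h (cmp M g f) = cmp M (cmp M h g) f)"

definition strict_monoidal_ax :: "('o, 'm, 'z) mcat_scheme \<Rightarrow> bool" where
  "strict_monoidal_ax M \<longleftrightarrow>
     unito M \<in> Ob M
   \<and> (\<forall>A \<in> Ob M. \<forall>B \<in> Ob M. otens M A B \<in> Ob M)
   \<and> (\<forall>A \<in> Ob M. \<forall>B \<in> Ob M. \<forall>D \<in> Ob M.
        otens M (otens M A B) D = otens M A (otens M B D))
   \<and> (\<forall>A \<in> Ob M. otens M (unito M) A = A \<and> otens M A (unito M) = A)
   \<and> (\<forall>A B A' B' f g. f \<in> Hom M A B \<longrightarrow> g \<in> Hom M A' B' \<longrightarrow>
        mtens M f g \<in> Hom M (otens M A A') (otens M B B'))
   \<and> (\<forall>A B A' B' A'' B'' f g h. f \<in> Hom M A B \<longrightarrow> g \<in> Hom M A' B' \<longrightarrow> h \<in> Hom M A'' B'' \<longrightarrow>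
        mtens M (mtens M f g) h = mtens M f (mtens M g h))
   \<and> (\<forall>A B f. f \<in> Hom M A B \<longrightarrow>
        mtens M (idm M (unito M)) f = f \<and> mtens M f (idm M (unito M)) = f)
   \<and> (\<forall>A \<in> Ob M. \<forall>B \<in> Ob M. mtens M (idm M A) (idm M B) = idm M (otens M A B))
   \<and> (\<forall>A B D A' B' D' f g f' g'. f \<in> Hom M A B \<longrightarrow> g \<in> Hom M B D \<longrightarrow>
        f' \<in> Hom M A' B' \<longrightarrow> g' \<in> Hom M B' D' \<longrightarrow>
        mtens M (cmp M g f) (cmp M g' f') = cmp M (mtens M g g') (mtens M f f'))"

definition symmetric_ax :: "('o, 'm, 'z) mcat_scheme \<Rightarrow> bool" where
  "symmetric_ax M \<longleftrightarrow>
     (\<forall>A \<in> Ob M. \<forall>B \<in> Ob M. swp M A B \<in> Hom M (otens M A B) (otens M B A))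
   \<and> (\<forall>A B A' B' f g. f \<in> Hom M A A' \<longrightarrow> g \<in> Hom M B B' \<longrightarrow>
        cmp M (swp M A' B') (mtens M f g) = cmp M (mtens M g f) (swp M A B))
   \<and> (\<forall>A \<in> Ob M. \<forall>B \<in> Ob M. cmp M (swp M B A) (swp M A B) = idm M (otens M A B))
   \<and> (\<forall>A \<in> Ob M. \<forall>B \<in> Ob M. \<forall>D \<in> Ob M.
        swp M A (otens M B D) = cmp M (mtens M (idm M B) (swp M A D)) (mtens M (swp M A B) (idm M D)))
   \<and> (\<forall>A \<in> Ob M. swp M A (unito M) = idm M A)"

definition markov_ax :: "('o, 'm, 'z) mcat_scheme \<Rightarrow> bool" where
  "markov_ax M \<longleftrightarrow>
     (\<forall>A \<in> Ob M. cpy M A \<in> Hom M A (otens M A A) \<and> dl M A \<in> Hom M A (unito M))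
   \<and> (\<forall>A \<in> Ob M. cmp M (mtens M (dl M A) (idm M A)) (cpy M A) = idm M A
              \<and> cmp M (mtens M (idm M A) (dl M A)) (cpy M A) = idm M A)
   \<and> (\<forall>A \<in> Ob M. cmp M (mtens M (cpy M A) (idm M A)) (cpy M A)
              = cmp M (mtens M (idm M A) (cpy M A)) (cpy M A))
   \<and> (\<forall>A \<in> Ob M. cmp M (swp M A A) (cpy M A) = cpy M A)
   \<and> (\<forall>A \<in> Ob M. \<forall>B \<in> Ob M. cpy M (otens M A B)
        = cmp M (mtens M (mtens M (idm M A) (swp M A B)) (idm M B)) (mtens M (cpy M A) (cpy M B)))
   \<and> (\<forall>A \<in> Ob M. \<forall>B \<in> Ob M. dl M (otens M A B) = mtens M (dl M A) (dl M B))
   \<and> cpy M (unito M) = idm M (unito M)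
   \<and> dl M (unito M) = idm M (unito M)
   \<and> (\<forall>A \<in> Ob M. Hom M A (unito M) = {dl M A})"

definition markov_category :: "('o, 'm, 'z) mcat_scheme \<Rightarrow> bool" where
  "markov_category M \<longleftrightarrow> category_ax M \<and> strict_monoidal_ax M \<and> symmetric_ax M \<and> markov_ax M"

definition deterministic :: "('o, 'm, 'z) mcat_scheme \<Rightarrow> 'o \<Rightarrow> 'o \<Rightarrow> 'm \<Rightarrow> bool" where
  "deterministic M A B f \<longleftrightarrow> f \<in> Hom M A B \<and>
     cmp M (cpy M B) f = cmp M (mtens M f f) (cpy M A)"

definition pairing :: "('o, 'm, 'z) mcat_scheme \<Rightarrow> 'o \<Rightarrow> 'm \<Rightarrow> 'm \<Rightarrow> 'm" where
  "pairing M A f g = cmp M (mtens M f g) (cpy M A)"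

definition marg1 :: "('o, 'm, 'z) mcat_scheme \<Rightarrow> 'o \<Rightarrow> 'o \<Rightarrow> 'm \<Rightarrow> 'm" where
  "marg1 M X Y f = cmp M (mtens M (idm M X) (dl M Y)) f"

definition marg2 :: "('o, 'm, 'z) mcat_scheme \<Rightarrow> 'o \<Rightarrow> 'o \<Rightarrow> 'm \<Rightarrow> 'm" where
  "marg2 M X Y f = cmp M (mtens M (dl M X) (idm M Y)) f"

definition is_cond1 :: "('o, 'm, 'z) mcat_scheme \<Rightarrow> 'o \<Rightarrow> 'o \<Rightarrow> 'o \<Rightarrow> 'm \<Rightarrow> 'm \<Rightarrow> bool" where
  "is_cond1 M A X Y f c \<longleftrightarrow> c \<in> Hom M (otens M X A) Y \<and>
     f = cmp M (mtens M (idm M X) c)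
           (cmp M (mtens M (cpy M X) (idm M A))
             (cmp M (mtens M (marg1 M X Y f) (idm M A)) (cpy M A)))"

definition is_cond2 :: "('o, 'm, 'z) mcat_scheme \<Rightarrow> 'o \<Rightarrow> 'o \<Rightarrow> 'o \<Rightarrow> 'm \<Rightarrow> 'm \<Rightarrow> bool" where
  "is_cond2 M A X Y f c \<longleftrightarrow> is_cond1 M A Y X (cmp M (swp M X Y) f) c"

definition has_conditionals :: "('o, 'm, 'z) mcat_scheme \<Rightarrow> bool" where
  "has_conditionals M \<longleftrightarrow>
     (\<forall>A \<in> Ob M. \<forall>X \<in> Ob M. \<forall>Y \<in> Ob M. \<forall>f. f \<in> Hom M A (otens M X Y) \<longrightarrow>
        (\<exists>c. is_cond1 M A X Y f c) \<and> (\<exists>c. is_cond2 M A X Y f c))"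

definition as_eq :: "('o, 'm, 'z) mcat_scheme \<Rightarrow> 'o \<Rightarrow> 'm \<Rightarrow> 'm \<Rightarrow> 'm \<Rightarrow> bool" where
  "as_eq M X \<mu> f g \<longleftrightarrow>
     cmp M (pairing M X (idm M X) f) \<mu> = cmp M (pairing M X (idm M X) g) \<mu>"

definition abs_cont :: "('o, 'm, 'z) mcat_scheme \<Rightarrow> 'o \<Rightarrow> 'm \<Rightarrow> 'm \<Rightarrow> bool" where
  "abs_cont M X \<mu> \<nu> \<longleftrightarrow>
     (\<forall>Y \<in> Ob M. \<forall>f g. f \<in> Hom M X Y \<longrightarrow> g \<in> Hom M X Y \<longrightarrow>
        as_eq M X \<nu> f g \<longrightarrow> as_eq M X \<mu> f g)"

definition precise_supports :: "('o, 'm, 'z) mcat_scheme \<Rightarrow> bool" where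
  "precise_supports M \<longleftrightarrow>
     (\<forall>X \<in> Ob M. \<forall>Y \<in> Ob M. \<forall>x y f \<mu>.
        deterministic M (unito M) X x \<longrightarrow> deterministic M (unito M) Y y \<longrightarrow>
        f \<in> Hom M X Y \<longrightarrow> \<mu> \<in> Hom M (unito M) X \<longrightarrow>
        (abs_cont M (otens M X Y) (mtens M x y) (cmp M (pairing M X (idm M X) f) \<mu>)
          \<longleftrightarrow> abs_cont M X x \<mu> \<and> abs_cont M Y y (cmp M f x)))"

text \<open>A morphism \<open>X \<leadsto> Y\<close> of Obs(C) is a triple \<open>(K, f, o)\<close>; we record its
  domain \<open>X\<close> and codomain \<open>Y\<close> explicitly.\<close>

record ('o, 'm) obsm =
  obs_dom :: 'o
  obs_cod :: 'o
  obs_K :: 'o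
  obs_f :: 'm
  obs_o :: 'm

definition is_obs :: "('o, 'm, 'z) mcat_scheme \<Rightarrow> ('o, 'm) obsm \<Rightarrow> bool" where
  "is_obs M F \<longleftrightarrow> obs_dom F \<in> Ob M \<and> obs_cod F \<in> Ob M \<and> obs_K F \<in> Ob M
     \<and> obs_f F \<in> Hom M (obs_dom F) (otens M (obs_cod F) (obs_K F))
     \<and> deterministic M (unito M) (obs_K F) (obs_o F)"

definition obs_id :: "('o, 'm, 'z) mcat_scheme \<Rightarrow> 'o \<Rightarrow> ('o, 'm) obsm" where
  "obs_id M X = \<lparr>obs_dom = X, obs_cod = X, obs_K = unito M, obs_f = idm M X,
                 obs_o = idm M (unito M)\<rparr>"

definition obs_comp :: "('o, 'm, 'z) mcat_scheme \<Rightarrow> ('o, 'm) obsm \<Rightarrow> ('o, 'm) obsm \<Rightarrow> ('o, 'm) obsm" where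
  "obs_comp M G F = \<lparr>obs_dom = obs_dom F, obs_cod = obs_cod G,
     obs_K = otens M (obs_K G) (obs_K F),
     obs_f = cmp M (mtens M (obs_f G) (idm M (obs_K F))) (obs_f F),
     obs_o = mtens M (obs_o G) (obs_o F)\<rparr>"

definition obs_tensor :: "('o, 'm, 'z) mcat_scheme \<Rightarrow> ('o, 'm) obsm \<Rightarrow> ('o, 'm) obsm \<Rightarrow> ('o, 'm) obsm" where
  "obs_tensor M F' F = \<lparr>obs_dom = otens M (obs_dom F') (obs_dom F),
     obs_cod = otens M (obs_cod F') (obs_cod F),
     obs_K = otens M (obs_K F') (obs_K F),
     obs_f = cmp M (mtens M (mtens M (idm M (obs_cod F')) (swp M (obs_K F') (obs_cod F))) (idm M (obs_K F)))
                   (mtens M (obs_f F') (obs_f F)),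
     obs_o = mtens M (obs_o F') (obs_o F)\<rparr>"

definition obs_J :: "('o, 'm, 'z) mcat_scheme \<Rightarrow> 'o \<Rightarrow> 'o \<Rightarrow> 'm \<Rightarrow> ('o, 'm) obsm" where
  "obs_J M X Y f = \<lparr>obs_dom = X, obs_cod = Y, obs_K = unito M, obs_f = f, obs_o = idm M (unito M)\<rparr>"

definition cond_eff :: "('o, 'm, 'z) mcat_scheme \<Rightarrow> 'o \<Rightarrow> 'm \<Rightarrow> ('o, 'm) obsm" where
  "cond_eff M X s = \<lparr>obs_dom = X, obs_cod = unito M, obs_K = X, obs_f = idm M X, obs_o = s\<rparr>"

definition state_equiv :: "('o, 'm, 'z) mcat_scheme \<Rightarrow> ('o, 'm) obsm \<Rightarrow> ('o, 'm) obsm \<Rightarrow> bool" where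
  "state_equiv M P Q \<longleftrightarrow>
     (abs_cont M (obs_K P) (obs_o P) (marg2 M (obs_cod P) (obs_K P) (obs_f P))
      \<and> abs_cont M (obs_K Q) (obs_o Q) (marg2 M (obs_cod Q) (obs_K Q) (obs_f Q))
      \<and> (\<exists>c c'. is_cond2 M (unito M) (obs_cod P) (obs_K P) (obs_f P) c
              \<and> is_cond2 M (unito M) (obs_cod Q) (obs_K Q) (obs_f Q) c'
              \<and> cmp M c (obs_o P) = cmp M c' (obs_o Q)))
   \<or> (\<not> abs_cont M (obs_K P) (obs_o P) (marg2 M (obs_cod P) (obs_K P) (obs_f P))
      \<and> \<not> abs_cont M (obs_K Q) (obs_o Q) (marg2 M (obs_cod Q) (obs_K Q) (obs_f Q)))"

definition obs_approx :: "('o, 'm, 'z) mcat_scheme \<Rightarrow> ('o, 'm) obsm \<Rightarrow> ('o, 'm) obsm \<Rightarrow> bool" where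
  "obs_approx M F G \<longleftrightarrow>
     (\<forall>A \<in> Ob M. \<forall>\<Psi>. is_obs M \<Psi> \<and> obs_dom \<Psi> = unito M \<and> obs_cod \<Psi> = otens M A (obs_dom F) \<longrightarrow>
        state_equiv M (obs_comp M (obs_tensor M (obs_id M A) F) \<Psi>)
                      (obs_comp M (obs_tensor M (obs_id M A) G) \<Psi>))"

end

theory Submission
  imports Defs
begin

locale MC =
  fixes M :: "('o, 'm, 'z) mcat_scheme"
  assumes mc: "markov_category M"
begin

abbreviation "Cm \<equiv> cmp M"
abbreviation "Tm \<equiv> mtens M"
abbreviation "Idm \<equiv> idm M"
abbreviation "Ot \<equiv> otens M"
abbreviation "U \<equiv> unito M"
abbreviation "Hm \<equiv> Hom M"
abbreviation "Sw \<equiv> swp M"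
abbreviation "Cp \<equiv> cpy M"
abbreviation "Dl \<equiv> dl M"

lemma cat: "category_ax M" and smon: "strict_monoidal_ax M" and sym: "symmetric_ax M"
  and mk: "markov_ax M"
  using mc unfolding markov_category_def by auto

lemma hom_ob: "f \<in> Hm A B \<Longrightarrow> A \<in> Ob M \<and> B \<in> Ob M"
  using cat unfolding category_ax_def by meson
lemma hom_uniq: "f \<in> Hm A B \<Longrightarrow> f \<in> Hm A' B' \<Longrightarrow> A = A' \<and> B = B'"
  using cat unfolding category_ax_def by meson
lemma id_hom: "A \<in> Ob M \<Longrightarrow> Idm A \<in> Hm A A"
  using cat unfolding category_ax_def by meson
lemma comp_hom: "f \<in> Hm A B \<Longrightarrow> g \<in> Hm B D \<Longrightarrow> Cm g f \<in> Hm A D"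
  using cat unfolding category_ax_def by meson
lemma id_l: "f \<in> Hm A B \<Longrightarrow> Cm (Idm B) f = f"
  using cat unfolding category_ax_def by meson
lemma id_r: "f \<in> Hm A B \<Longrightarrow> Cm f (Idm A) = f"
  using cat unfolding category_ax_def by meson
lemma cassoc: "f \<in> Hm A B \<Longrightarrow> g \<in> Hm B D \<Longrightarrow> h \<in> Hm D E \<Longrightarrow>
        Cm h (Cm g f) = Cm (Cm h g) f"
  using cat unfolding category_ax_def by meson

lemma U_ob: "U \<in> Ob M" using smon unfolding strict_monoidal_ax_def by meson
lemma O_ob: "A \<in> Ob M \<Longrightarrow> B \<in> Ob M \<Longrightarrow> Ot A B \<in> Ob M"
  using smon unfolding strict_monoidal_ax_def by meson
lemma O_assoc: "A \<in> Ob M \<Longrightarrow> B \<in> Ob M \<Longrightarrow> D \<in> Ob M \<Longrightarrow> Ot (Ot A B) D = Ot A (Ot B D)"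
  using smon unfolding strict_monoidal_ax_def by meson
lemma O_Ul: "A \<in> Ob M \<Longrightarrow> Ot U A = A"
  using smon unfolding strict_monoidal_ax_def by meson
lemma O_Ur: "A \<in> Ob M \<Longrightarrow> Ot A U = A"
  using smon unfolding strict_monoidal_ax_def by meson
lemma T_hom: "f \<in> Hm A B \<Longrightarrow> g \<in> Hm A' B' \<Longrightarrow> Tm f g \<in> Hm (Ot A A') (Ot B B')"
  using smon unfolding strict_monoidal_ax_def by meson
lemma T_assoc: "f \<in> Hm A B \<Longrightarrow> g \<in> Hm A' B' \<Longrightarrow> h \<in> Hm A'' B'' \<Longrightarrow>
        Tm (Tm f g) h = Tm f (Tm g h)"
  using smon unfolding strict_monoidal_ax_def by meson
lemma T_Ul: "f \<in> Hm A B \<Longrightarrow> Tm (Idm U) f = f"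
  using smon unfolding strict_monoidal_ax_def by meson
lemma T_Ur: "f \<in> Hm A B \<Longrightarrow> Tm f (Idm U) = f"
  using smon unfolding strict_monoidal_ax_def by meson
lemma T_id: "A \<in> Ob M \<Longrightarrow> B \<in> Ob M \<Longrightarrow> Tm (Idm A) (Idm B) = Idm (Ot A B)"
  using smon unfolding strict_monoidal_ax_def by meson
lemma inter: "f \<in> Hm A B \<Longrightarrow> g \<in> Hm B D \<Longrightarrow> f' \<in> Hm A' B' \<Longrightarrow> g' \<in> Hm B' D' \<Longrightarrow>
        Tm (Cm g f) (Cm g' f') = Cm (Tm g g') (Tm f f')"
  using smon unfolding strict_monoidal_ax_def by meson

lemma sw_hom: "A \<in> Ob M \<Longrightarrow> B \<in> Ob M \<Longrightarrow> Sw A B \<in> Hm (Ot A B) (Ot B A)"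
  using sym unfolding symmetric_ax_def by meson
lemma sw_nat: "f \<in> Hm A A' \<Longrightarrow> g \<in> Hm B B' \<Longrightarrow>
        Cm (Sw A' B') (Tm f g) = Cm (Tm g f) (Sw A B)"
  using sym unfolding symmetric_ax_def by meson
lemma sw_U: "A \<in> Ob M \<Longrightarrow> Sw A U = Idm A"
  using sym unfolding symmetric_ax_def by meson

lemma cp_hom: "A \<in> Ob M \<Longrightarrow> Cp A \<in> Hm A (Ot A A)"
  using mk unfolding markov_ax_def by meson
lemma dl_hom: "A \<in> Ob M \<Longrightarrow> Dl A \<in> Hm A U"
  using mk unfolding markov_ax_def by meson
lemma counit_l: "A \<in> Ob M \<Longrightarrow> Cm (Tm (Dl A) (Idm A)) (Cp A) = Idm A"
  using mk unfolding markov_ax_def by meson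
lemma counit_r: "A \<in> Ob M \<Longrightarrow> Cm (Tm (Idm A) (Dl A)) (Cp A) = Idm A"
  using mk unfolding markov_ax_def by meson
lemma coassoc: "A \<in> Ob M \<Longrightarrow> Cm (Tm (Cp A) (Idm A)) (Cp A) = Cm (Tm (Idm A) (Cp A)) (Cp A)"
  using mk unfolding markov_ax_def by meson
lemma cocomm: "A \<in> Ob M \<Longrightarrow> Cm (Sw A A) (Cp A) = Cp A"
  using mk unfolding markov_ax_def by meson
lemma cp_O: "A \<in> Ob M \<Longrightarrow> B \<in> Ob M \<Longrightarrow> Cp (Ot A B)
        = Cm (Tm (Tm (Idm A) (Sw A B)) (Idm B)) (Tm (Cp A) (Cp B))"
  using mk unfolding markov_ax_def by meson
lemma cp_U: "Cp U = Idm U" using mk unfolding markov_ax_def by meson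
lemma dl_U: "Dl U = Idm U" using mk unfolding markov_ax_def by meson
lemma hom_U: "A \<in> Ob M \<Longrightarrow> Hm A U = {Dl A}"
  using mk unfolding markov_ax_def by meson

lemma to_U: "f \<in> Hm A U \<Longrightarrow> f = Dl A"
  using hom_U hom_ob by blast

lemma swUU: "Sw U U = Idm U" using sw_U U_ob by blast


lemmas obs = O_assoc O_ob O_Ul O_Ur U_ob

lemma T_id_U: "A \<in> Ob M \<Longrightarrow> Tm (Idm A) (Idm U) = Idm A"
  using T_Ur id_hom by blast
lemma T_U_id: "A \<in> Ob M \<Longrightarrow> Tm (Idm U) (Idm A) = Idm A"
  using T_Ul id_hom by blast

lemma det_state: "deterministic M U X s \<Longrightarrow> Cm (Cp X) s = Tm s s"
proof -
  assume d: "deterministic M U X s"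
  hence sh: "s \<in> Hm U X" and e: "Cm (Cp X) s = Cm (Tm s s) (Cp U)" unfolding deterministic_def by auto
  have "Tm s s \<in> Hm U (Ot X X)" using T_hom[OF sh sh] by (simp add: obs)
  thus ?thesis using e cp_U id_r by metis
qed

lemma det_tensor:
  assumes df: "deterministic M A B f" and dg: "deterministic M A' B' g"
  shows "deterministic M (Ot A A') (Ot B B') (Tm f g)"
proof -
  have fh: "f \<in> Hm A B" and ef: "Cm (Cp B) f = Cm (Tm f f) (Cp A)"
    using df unfolding deterministic_def by auto
  have gh: "g \<in> Hm A' B'" and eg: "Cm (Cp B') g = Cm (Tm g g) (Cp A')"
    using dg unfolding deterministic_def by auto
  have oA: "A \<in> Ob M" "B \<in> Ob M" using hom_ob[OF fh] by auto
  have oA': "A' \<in> Ob M" "B' \<in> Ob M" using hom_ob[OF gh] by auto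
  have cpA: "Cp A \<in> Hm A (Ot A A)" and cpB: "Cp B \<in> Hm B (Ot B B)"
   and cpA': "Cp A' \<in> Hm A' (Ot A' A')" and cpB': "Cp B' \<in> Hm B' (Ot B' B')"
    using cp_hom oA oA' by auto
  define SB where "SB = Tm (Tm (Idm B) (Sw B B')) (Idm B')"
  define SA where "SA = Tm (Tm (Idm A) (Sw A A')) (Idm A')"
  have swB: "Sw B B' \<in> Hm (Ot B B') (Ot B' B)" using sw_hom oA oA' by auto
  have swA: "Sw A A' \<in> Hm (Ot A A') (Ot A' A)" using sw_hom oA oA' by auto
  have iB: "Idm B \<in> Hm B B" and iB': "Idm B' \<in> Hm B' B'" and iA: "Idm A \<in> Hm A A"
    and iA': "Idm A' \<in> Hm A' A'" using id_hom oA oA' by auto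
  have SBh: "SB \<in> Hm (Ot B (Ot B (Ot B' B'))) (Ot B (Ot B' (Ot B B')))"
    unfolding SB_def using T_hom[OF T_hom[OF iB swB] iB'] oA oA' by (simp add: obs)
  have SAh: "SA \<in> Hm (Ot A (Ot A (Ot A' A'))) (Ot A (Ot A' (Ot A A')))"
    unfolding SA_def using T_hom[OF T_hom[OF iA swA] iA'] oA oA' by (simp add: obs)
  have cc: "Tm (Cp B) (Cp B') \<in> Hm (Ot B B') (Ot B (Ot B (Ot B' B')))"
    using T_hom[OF cpB cpB'] oA oA' by (simp add: obs)
  have ccA: "Tm (Cp A) (Cp A') \<in> Hm (Ot A A') (Ot A (Ot A (Ot A' A')))"
    using T_hom[OF cpA cpA'] oA oA' by (simp add: obs)
  have fg: "Tm f g \<in> Hm (Ot A A') (Ot B B')" using T_hom[OF fh gh] .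
  have gf: "Tm g f \<in> Hm (Ot A' A) (Ot B' B)" using T_hom[OF gh fh] .
  have ff: "Tm f f \<in> Hm (Ot A A) (Ot B B)" using T_hom[OF fh fh] .
  have gg: "Tm g g \<in> Hm (Ot A' A') (Ot B' B')" using T_hom[OF gh gh] .
  have ffgg: "Tm (Tm f f) (Tm g g) \<in> Hm (Ot A (Ot A (Ot A' A'))) (Ot B (Ot B (Ot B' B')))"
    using T_hom[OF ff gg] oA oA' by (simp add: obs)
  have fgfg: "Tm (Tm f g) (Tm f g) \<in> Hm (Ot A (Ot A' (Ot A A'))) (Ot B (Ot B' (Ot B B')))"
    using T_hom[OF fg fg] oA oA' by (simp add: obs)
  have step1: "Cm (Tm (Cp B) (Cp B')) (Tm f g) = Cm (Tm (Tm f f) (Tm g g)) (Tm (Cp A) (Cp A'))"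
    using inter[OF fh cpB gh cpB'] inter[OF cpA ff cpA' gg] ef eg by simp
  have a1: "Tm (Tm f f) (Tm g g) = Tm (Tm f (Tm f g)) g"
    using T_assoc[OF fh fh gg] T_assoc[OF fh gh gh] T_assoc[OF fh fg gh] by simp
  have a2: "Tm (Tm f g) (Tm f g) = Tm (Tm f (Tm g f)) g"
    using T_assoc[OF fh gh fg] T_assoc[OF gh fh gh] T_assoc[OF fh gf gh] by simp
  have ffg: "Tm f (Tm f g) \<in> Hm (Ot A (Ot A A')) (Ot B (Ot B B'))" using T_hom[OF fh fg] .
  have fgf: "Tm f (Tm g f) \<in> Hm (Ot A (Ot A' A)) (Ot B (Ot B' B))" using T_hom[OF fh gf] .
  have ISA: "Tm (Idm A) (Sw A A') \<in> Hm (Ot A (Ot A A')) (Ot A (Ot A' A))" using T_hom[OF iA swA] .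
  have key: "Cm SB (Tm (Tm f f) (Tm g g)) = Cm (Tm (Tm f g) (Tm f g)) SA"
  proof -
    have "Cm SB (Tm (Tm f f) (Tm g g)) = Tm (Cm (Tm (Idm B) (Sw B B')) (Tm f (Tm f g))) (Cm (Idm B') g)"
      unfolding SB_def a1 using inter[OF ffg T_hom[OF iB swB] gh iB'] by simp
    also have "\<dots> = Tm (Tm (Cm (Idm B) f) (Cm (Sw B B') (Tm f g))) g"
      using inter[OF fh iB fg swB] id_l[OF gh] by simp
    also have "\<dots> = Tm (Tm (Cm f (Idm A)) (Cm (Tm g f) (Sw A A'))) (Cm g (Idm A'))"
      using id_l[OF fh] id_r[OF fh] id_r[OF gh] sw_nat[OF fh gh] by simp
    also have "\<dots> = Tm (Cm (Tm f (Tm g f)) (Tm (Idm A) (Sw A A'))) (Cm g (Idm A'))"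
      using inter[OF iA fh swA gf] by simp
    also have "\<dots> = Cm (Tm (Tm f (Tm g f)) g) SA"
      unfolding SA_def using inter[OF ISA fgf iA' gh] by simp
    finally show ?thesis using a2 by simp
  qed
  have "Cm (Cp (Ot B B')) (Tm f g) = Cm (Cm SB (Tm (Cp B) (Cp B'))) (Tm f g)"
    using cp_O oA oA' SB_def by simp
  also have "\<dots> = Cm SB (Cm (Tm (Cp B) (Cp B')) (Tm f g))"
    using cassoc[OF fg cc SBh] by simp
  also have "\<dots> = Cm (Cm SB (Tm (Tm f f) (Tm g g))) (Tm (Cp A) (Cp A'))"
    using step1 cassoc[OF ccA ffgg SBh] by simp
  also have "\<dots> = Cm (Tm (Tm f g) (Tm f g)) (Cm SA (Tm (Cp A) (Cp A')))"
    using key cassoc[OF ccA SAh fgfg] by simp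
  also have "\<dots> = Cm (Tm (Tm f g) (Tm f g)) (Cp (Ot A A'))"
    using cp_O oA oA' SA_def by simp
  finally show ?thesis unfolding deterministic_def using fg by simp
qed


lemma id_det: "A \<in> Ob M \<Longrightarrow> deterministic M A A (Idm A)"
  unfolding deterministic_def using id_hom id_l id_r cp_hom T_id by metis

lemma cp_det: assumes oA: "A \<in> Ob M" shows "deterministic M A (Ot A A) (Cp A)"
proof -
  have cp: "Cp A \<in> Hm A (Ot A A)" using cp_hom oA by auto
  have iA: "Idm A \<in> Hm A A" using id_hom oA by auto
  have sw: "Sw A A \<in> Hm (Ot A A) (Ot A A)" using sw_hom oA by auto
  have iAA: "Idm (Ot A A) \<in> Hm (Ot A A) (Ot A A)" using id_hom O_ob oA by auto
  have iAcp: "Tm (Idm A) (Cp A) \<in> Hm (Ot A A) (Ot A (Ot A A))" using T_hom[OF iA cp] oA by (simp add: obs)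
  have cpiA: "Tm (Cp A) (Idm A) \<in> Hm (Ot A A) (Ot A (Ot A A))" using T_hom[OF cp iA] oA by (simp add: obs)
  have iAAcp: "Tm (Idm (Ot A A)) (Cp A) \<in> Hm (Ot A (Ot A A)) (Ot A (Ot A (Ot A A)))"
    using T_hom[OF iAA cp] oA by (simp add: obs)
  define R where "R = Cm (Tm (Cp A) (Idm A)) (Cp A)"
  have Rh: "R \<in> Hm A (Ot A (Ot A A))" unfolding R_def using comp_hom[OF cp cpiA] .
  have R2: "R = Cm (Tm (Idm A) (Cp A)) (Cp A)" unfolding R_def using coassoc oA by simp
  have swi: "Tm (Sw A A) (Idm A) \<in> Hm (Ot A (Ot A A)) (Ot A (Ot A A))" using T_hom[OF sw iA] oA by (simp add: obs)
  have Q: "Cm (Tm (Cp A) (Cp A)) (Cp A) = Cm (Tm (Idm A) R) (Cp A)"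
  proof -
    have "Tm (Cp A) (Cp A) = Cm (Tm (Idm (Ot A A)) (Cp A)) (Tm (Cp A) (Idm A))"
      using inter[OF cp iAA iA cp] id_l[OF cp] id_r[OF cp] by simp
    hence "Cm (Tm (Cp A) (Cp A)) (Cp A) = Cm (Tm (Idm (Ot A A)) (Cp A)) (Cm (Tm (Cp A) (Idm A)) (Cp A))"
      using cassoc[OF cp cpiA iAAcp] by simp
    also have "\<dots> = Cm (Cm (Tm (Idm (Ot A A)) (Cp A)) (Tm (Idm A) (Cp A))) (Cp A)"
      using coassoc oA cassoc[OF cp iAcp iAAcp] by simp
    also have "Cm (Tm (Idm (Ot A A)) (Cp A)) (Tm (Idm A) (Cp A)) = Tm (Idm A) R"
    proof -
      have "Tm (Idm (Ot A A)) (Cp A) = Tm (Idm A) (Tm (Idm A) (Cp A))"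
        using T_id[OF oA oA] T_assoc[OF iA iA cp] by simp
      thus ?thesis using inter[OF iA iA cp iAcp] id_l[OF iA] R2 by simp
    qed
    finally show ?thesis .
  qed
  have S: "Cm (Tm (Tm (Idm A) (Sw A A)) (Idm A)) (Tm (Idm A) R) = Tm (Idm A) R"
  proof -
    have "Tm (Tm (Idm A) (Sw A A)) (Idm A) = Tm (Idm A) (Tm (Sw A A) (Idm A))"
      using T_assoc[OF iA sw iA] .
    moreover have "Cm (Tm (Sw A A) (Idm A)) R = R"
      unfolding R_def using cassoc[OF cp cpiA swi] inter[OF cp sw iA iA] cocomm oA id_l[OF iA] by simp
    ultimately show ?thesis using inter[OF iA iA Rh swi] id_l[OF iA] by simp
  qed
  have iAR: "Tm (Idm A) R \<in> Hm (Ot A A) (Ot A (Ot A (Ot A A)))" using T_hom[OF iA Rh] oA by (simp add: obs)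
  have Sh: "Tm (Tm (Idm A) (Sw A A)) (Idm A) \<in> Hm (Ot A (Ot A (Ot A A))) (Ot A (Ot A (Ot A A)))"
    using T_hom[OF T_hom[OF iA sw] iA] oA by (simp add: obs)
  have "Cm (Cp (Ot A A)) (Cp A) = Cm (Cm (Tm (Tm (Idm A) (Sw A A)) (Idm A)) (Tm (Cp A) (Cp A))) (Cp A)"
    using cp_O oA by simp
  also have "\<dots> = Cm (Tm (Tm (Idm A) (Sw A A)) (Idm A)) (Cm (Tm (Cp A) (Cp A)) (Cp A))"
    using cassoc[OF cp T_hom[OF cp cp] ] Sh oA by (simp add: obs)
  also have "\<dots> = Cm (Tm (Idm A) R) (Cp A)"
    using Q S cassoc[OF cp iAR Sh] by simp
  also have "\<dots> = Cm (Tm (Cp A) (Cp A)) (Cp A)" using Q by simp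
  finally show ?thesis unfolding deterministic_def using cp by simp
qed


lemma abs_refl: "abs_cont M X s s" unfolding abs_cont_def by blast

lemma core:
  assumes hc: "has_conditionals M" and ps: "precise_supports M"
    and oA: "A \<in> Ob M" and oX: "X \<in> Ob M" and oK: "K \<in> Ob M"
    and psi: "\<psi> \<in> Hm U (Ot A (Ot X K))"
    and ds: "deterministic M U X s" and dp: "deterministic M U K p"
  shows "state_equiv M
     \<lparr>obs_dom = U, obs_cod = A, obs_K = Ot X (Ot X K),
        obs_f = Cm (Tm (Idm A) (Tm (Cp X) (Idm K))) \<psi>, obs_o = Tm s (Tm s p)\<rparr>
     \<lparr>obs_dom = U, obs_cod = A, obs_K = Ot X K, obs_f = \<psi>, obs_o = Tm s p\<rparr>"
proof -
  define W where "W = Ot X K"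
  define Y where "Y = Ot X W"
  define g where "g = Tm (Cp X) (Idm K)"
  have oW: "W \<in> Ob M" and oY: "Y \<in> Ob M" unfolding W_def Y_def using oX oK by (auto simp: obs)
  have psi': "\<psi> \<in> Hm U (Ot A W)" using psi W_def by simp
  have sh: "s \<in> Hm U X" using ds unfolding deterministic_def by auto
  have ph: "p \<in> Hm U K" using dp unfolding deterministic_def by auto
  have cpX: "Cp X \<in> Hm X (Ot X X)" using cp_hom oX by auto
  have iX: "Idm X \<in> Hm X X" and iK: "Idm K \<in> Hm K K" and iA: "Idm A \<in> Hm A A"
    and iW: "Idm W \<in> Hm W W" and iY: "Idm Y \<in> Hm Y Y" and iU: "Idm U \<in> Hm U U"
    using id_hom oX oK oA oW oY U_ob by auto
  have dlA: "Dl A \<in> Hm A U" and dlX: "Dl X \<in> Hm X U" using dl_hom oA oX by auto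
  have gh: "g \<in> Hm W Y" unfolding g_def W_def Y_def using T_hom[OF cpX iK] oX oK by (simp add: obs)
  have gdet: "deterministic M W Y g" unfolding g_def W_def Y_def
    using det_tensor[OF cp_det[OF oX] id_det[OF oK]] oX oK by (simp add: obs)
  have spdet: "deterministic M U W (Tm s p)" unfolding W_def
    using det_tensor[OF ds dp] oX oK by (simp add: obs)
  have sph: "Tm s p \<in> Hm U W" using spdet unfolding deterministic_def by auto
  have sspdet: "deterministic M U Y (Tm s (Tm s p))" unfolding Y_def
    using det_tensor[OF ds spdet] oX oW by (simp add: obs)
  have ssph: "Tm s (Tm s p) \<in> Hm U Y" using sspdet unfolding deterministic_def by auto
  have iAg: "Tm (Idm A) g \<in> Hm (Ot A W) (Ot A Y)" using T_hom[OF iA gh] .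
  define fQ where "fQ = Cm (Tm (Idm A) g) \<psi>"
  have fQh: "fQ \<in> Hm U (Ot A Y)" unfolding fQ_def using comp_hom[OF psi' iAg] .
  define \<nu> where "\<nu> = Cm (Tm (Dl A) (Idm W)) \<psi>"
  have dlW: "Tm (Dl A) (Idm W) \<in> Hm (Ot A W) W" using T_hom[OF dlA iW] oW by (simp add: obs)
  have dlY: "Tm (Dl A) (Idm Y) \<in> Hm (Ot A Y) Y" using T_hom[OF dlA iY] oY by (simp add: obs)
  have nuh: "\<nu> \<in> Hm U W" unfolding \<nu>_def using comp_hom[OF psi' dlW] .
  have mP: "marg2 M A W \<psi> = \<nu>" unfolding marg2_def \<nu>_def ..
  have mQ: "marg2 M A Y fQ = Cm g \<nu>"
  proof -
    have "Cm (Tm (Dl A) (Idm Y)) (Tm (Idm A) g) = Tm (Dl A) g"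
      using inter[OF iA dlA gh iY] id_l[OF gh] id_r[OF dlA] by simp
    also have "\<dots> = Cm (Tm (Idm U) g) (Tm (Dl A) (Idm W))"
      using inter[OF dlA iU iW gh] id_l[OF dlA] id_r[OF gh] by simp
    also have "\<dots> = Cm g (Tm (Dl A) (Idm W))" using T_Ul[OF gh] by simp
    finally have e: "Cm (Tm (Dl A) (Idm Y)) (Tm (Idm A) g) = Cm g (Tm (Dl A) (Idm W))" .
    show ?thesis unfolding marg2_def fQ_def \<nu>_def
      using cassoc[OF psi' iAg dlY] e cassoc[OF psi' dlW gh] by simp
  qed
  obtain h where hc1: "is_cond1 M U X K \<nu> h"
    using hc nuh oX oK U_ob unfolding has_conditionals_def W_def by blast
  define \<mu> where "\<mu> = marg1 M X K \<nu>"
  have hh: "h \<in> Hm X K" using hc1 oX unfolding is_cond1_def by (simp add: obs)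
  have muh: "\<mu> \<in> Hm U X" unfolding \<mu>_def marg1_def
    using comp_hom[OF nuh[unfolded W_def] T_hom[OF iX dl_hom[OF oK]]] oX by (simp add: obs)
  define ph1 where "ph1 = pairing M X (Idm X) h"
  have iXh: "Tm (Idm X) h \<in> Hm (Ot X X) W" using T_hom[OF iX hh] W_def by simp
  have ph1h: "ph1 \<in> Hm X W" unfolding ph1_def pairing_def using comp_hom[OF cpX iXh] .
  have nu_eq: "\<nu> = Cm ph1 \<mu>"
  proof -
    have "\<nu> = Cm (Tm (Idm X) h) (Cm (Tm (Cp X) (Idm U)) (Cm (Tm \<mu> (Idm U)) (Cp U)))"
      using hc1 unfolding is_cond1_def \<mu>_def by simp
    also have "\<dots> = Cm (Tm (Idm X) h) (Cm (Cp X) \<mu>)"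
      using T_Ur[OF cpX] T_Ur[OF muh] cp_U id_r[OF muh] by simp
    finally show ?thesis unfolding ph1_def pairing_def using cassoc[OF muh cpX iXh] by simp
  qed
  define ph2 where "ph2 = pairing M X (Idm X) ph1"
  have iXph: "Tm (Idm X) ph1 \<in> Hm (Ot X X) Y" using T_hom[OF iX ph1h] Y_def by simp
  have ph2h: "ph2 \<in> Hm X Y" unfolding ph2_def pairing_def using comp_hom[OF cpX iXph] .
  have gph1: "Cm g ph1 = ph2"
  proof -
    have cpiX: "Tm (Cp X) (Idm X) \<in> Hm (Ot X X) (Ot X (Ot X X))" using T_hom[OF cpX iX] oX by (simp add: obs)
    have iXcp: "Tm (Idm X) (Cp X) \<in> Hm (Ot X X) (Ot X (Ot X X))" using T_hom[OF iX cpX] oX by (simp add: obs)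
    have iXXh: "Tm (Idm (Ot X X)) h \<in> Hm (Ot X (Ot X X)) Y"
      using T_hom[OF id_hom[OF O_ob[OF oX oX]] hh] oX oK Y_def W_def by (simp add: obs)
    have e1: "Cm g (Tm (Idm X) h) = Tm (Cp X) h"
      unfolding g_def using inter[OF iX cpX hh iK] id_l[OF hh] id_r[OF cpX] by simp
    have e2: "Tm (Cp X) h = Cm (Tm (Idm (Ot X X)) h) (Tm (Cp X) (Idm X))"
      using inter[OF cpX id_hom[OF O_ob[OF oX oX]] iX hh] id_l[OF cpX] id_r[OF hh] by simp
    have e3: "Tm (Idm X) ph1 = Cm (Tm (Idm (Ot X X)) h) (Tm (Idm X) (Cp X))"
    proof -
      have "Tm (Idm X) ph1 = Cm (Tm (Idm X) (Tm (Idm X) h)) (Tm (Idm X) (Cp X))"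
        unfolding ph1_def pairing_def using inter[OF iX iX cpX iXh] id_l[OF iX] by simp
      thus ?thesis using T_assoc[OF iX iX hh] T_id[OF oX oX] by simp
    qed
    have "Cm g ph1 = Cm (Tm (Cp X) h) (Cp X)"
      unfolding ph1_def pairing_def using cassoc[OF cpX iXh gh] e1 by simp
    also have "\<dots> = Cm (Tm (Idm (Ot X X)) h) (Cm (Tm (Cp X) (Idm X)) (Cp X))"
      using e2 cassoc[OF cpX cpiX iXXh] by simp
    also have "\<dots> = Cm (Tm (Idm (Ot X X)) h) (Cm (Tm (Idm X) (Cp X)) (Cp X))"
      using coassoc oX by simp
    also have "\<dots> = ph2"
      unfolding ph2_def pairing_def using e3 cassoc[OF cpX iXcp iXXh] by simp
    finally show ?thesis .
  qed
  have mQ2: "marg2 M A Y fQ = Cm ph2 \<mu>"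
    using mQ nu_eq cassoc[OF muh ph1h gh] gph1 by simp
  have PS: "\<And>Y' x y f m. Y' \<in> Ob M \<Longrightarrow> deterministic M U X x \<Longrightarrow> deterministic M U Y' y \<Longrightarrow>
        f \<in> Hm X Y' \<Longrightarrow> m \<in> Hm U X \<Longrightarrow>
        abs_cont M (Ot X Y') (Tm x y) (Cm (pairing M X (Idm X) f) m)
          \<longleftrightarrow> abs_cont M X x m \<and> abs_cont M Y' y (Cm f x)"
    using ps oX unfolding precise_supports_def by blast
  have pa: "abs_cont M W (Tm s p) (Cm ph1 \<mu>) \<longleftrightarrow> abs_cont M X s \<mu> \<and> abs_cont M K p (Cm h s)"
    using PS[OF oK ds dp hh muh] W_def ph1_def by simp
  have pb: "abs_cont M Y (Tm s (Tm s p)) (Cm ph2 \<mu>) \<longleftrightarrow> abs_cont M X s \<mu> \<and> abs_cont M W (Tm s p) (Cm ph1 s)"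
    using PS[OF oW ds spdet ph1h muh] Y_def ph2_def by simp
  have pc: "abs_cont M W (Tm s p) (Cm ph1 s) \<longleftrightarrow> abs_cont M K p (Cm h s)"
    using PS[OF oK ds dp hh sh] W_def ph1_def abs_refl by simp
  have EQ: "abs_cont M Y (Tm s (Tm s p)) (marg2 M A Y fQ) \<longleftrightarrow> abs_cont M W (Tm s p) (marg2 M A W \<psi>)"
    using pa pb pc mQ2 mP nu_eq by simp
  have conds: "\<exists>c c'. is_cond2 M U A Y fQ c \<and> is_cond2 M U A W \<psi> c' \<and> Cm c (Tm s (Tm s p)) = Cm c' (Tm s p)"
  proof -
    obtain c' where c2: "is_cond2 M U A W \<psi> c'"
      using hc psi' oA oW U_ob unfolding has_conditionals_def by blast
    define \<rho> where "\<rho> = Cm (Sw A W) \<psi>"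
    define \<nu>' where "\<nu>' = marg1 M W A \<rho>"
    have swAW: "Sw A W \<in> Hm (Ot A W) (Ot W A)" using sw_hom oA oW by auto
    have swAY: "Sw A Y \<in> Hm (Ot A Y) (Ot Y A)" using sw_hom oA oY by auto
    have rhoh: "\<rho> \<in> Hm U (Ot W A)" unfolding \<rho>_def using comp_hom[OF psi' swAW] .
    have c'h: "c' \<in> Hm W A" using c2 oW unfolding is_cond2_def is_cond1_def \<rho>_def by (simp add: obs)
    have iWdl: "Tm (Idm W) (Dl A) \<in> Hm (Ot W A) W" using T_hom[OF iW dlA] oW by (simp add: obs)
    have iYdl: "Tm (Idm Y) (Dl A) \<in> Hm (Ot Y A) Y" using T_hom[OF iY dlA] oY by (simp add: obs)
    have nu'h: "\<nu>' \<in> Hm U W" unfolding \<nu>'_def marg1_def using comp_hom[OF rhoh iWdl] .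
    have cpW: "Cp W \<in> Hm W (Ot W W)" using cp_hom oW by auto
    have cpY: "Cp Y \<in> Hm Y (Ot Y Y)" using cp_hom oY by auto
    have iWc': "Tm (Idm W) c' \<in> Hm (Ot W W) (Ot W A)" using T_hom[OF iW c'h] .
    have cpnu: "Cm (Cp W) \<nu>' \<in> Hm U (Ot W W)" using comp_hom[OF nu'h cpW] .
    have rho_eq: "\<rho> = Cm (Tm (Idm W) c') (Cm (Cp W) \<nu>')"
    proof -
      have "\<rho> = Cm (Tm (Idm W) c') (Cm (Tm (Cp W) (Idm U)) (Cm (Tm \<nu>' (Idm U)) (Cp U)))"
        using c2 unfolding is_cond2_def is_cond1_def \<rho>_def \<nu>'_def by simp
      thus ?thesis using T_Ur[OF cpW] T_Ur[OF nu'h] cp_U id_r[OF nu'h] by simp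
    qed
    define c where "c = Cm c' (Tm (Dl X) (Idm W))"
    have dliW: "Tm (Dl X) (Idm W) \<in> Hm Y W" using T_hom[OF dlX iW] oW Y_def by (simp add: obs)
    have ch: "c \<in> Hm Y A" unfolding c_def using comp_hom[OF dliW c'h] .
    have gA: "Tm g (Idm A) \<in> Hm (Ot W A) (Ot Y A)" using T_hom[OF gh iA] .
    have s1: "Cm (Sw A Y) fQ = Cm (Tm g (Idm A)) \<rho>"
      unfolding fQ_def \<rho>_def using cassoc[OF psi' iAg swAY] sw_nat[OF iA gh] cassoc[OF psi' swAW gA]
      by simp
    have s2: "marg1 M Y A (Cm (Sw A Y) fQ) = Cm g \<nu>'"
    proof -
      have "Cm (Tm (Idm Y) (Dl A)) (Tm g (Idm A)) = Tm g (Dl A)"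
        using inter[OF gh iY iA dlA] id_l[OF gh] id_r[OF dlA] by simp
      also have "\<dots> = Cm (Tm g (Idm U)) (Tm (Idm W) (Dl A))"
        using inter[OF iW gh dlA iU] id_r[OF gh] id_l[OF dlA] by simp
      also have "\<dots> = Cm g (Tm (Idm W) (Dl A))" using T_Ur[OF gh] by simp
      finally have e: "Cm (Tm (Idm Y) (Dl A)) (Tm g (Idm A)) = Cm g (Tm (Idm W) (Dl A))" .
      show ?thesis unfolding marg1_def s1 \<nu>'_def
        using cassoc[OF rhoh gA iYdl] e cassoc[OF rhoh iWdl gh] by simp
    qed
    have gnu: "Cm g \<nu>' \<in> Hm U Y" using comp_hom[OF nu'h gh] .
    have cg: "Cm c g = c'"
    proof -
      have dX: "Tm (Dl X) (Idm X) \<in> Hm (Ot X X) X" using T_hom[OF dlX iX] oX by (simp add: obs)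
      have "Tm (Dl X) (Idm W) = Tm (Tm (Dl X) (Idm X)) (Idm K)"
        unfolding W_def using T_id[OF oX oK] T_assoc[OF dlX iX iK] by simp
      hence "Cm (Tm (Dl X) (Idm W)) g = Tm (Idm X) (Idm K)"
        unfolding g_def using inter[OF cpX dX iK iK] id_l[OF iK] counit_l oX by simp
      hence "Cm (Tm (Dl X) (Idm W)) g = Idm W" using T_id[OF oX oK] W_def by simp
      thus ?thesis unfolding c_def using cassoc[OF gh dliW c'h] id_r[OF c'h] by simp
    qed
    have gg: "Tm g g \<in> Hm (Ot W W) (Ot Y Y)" using T_hom[OF gh gh] .
    have iYc: "Tm (Idm Y) c \<in> Hm (Ot Y Y) (Ot Y A)" using T_hom[OF iY ch] .
    have gc': "Tm g c' \<in> Hm (Ot W W) (Ot Y A)" using T_hom[OF gh c'h] .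
    have gdet': "Cm (Cp Y) g = Cm (Tm g g) (Cp W)" using gdet unfolding deterministic_def by simp
    have LHS: "Cm (Sw A Y) fQ = Cm (Tm g c') (Cm (Cp W) \<nu>')"
      unfolding s1 rho_eq using cassoc[OF cpnu iWc' gA] inter[OF iW gh c'h iA] id_r[OF gh] id_l[OF c'h]
      by simp
    have RHS: "Cm (Tm (Idm Y) c) (Cm (Tm (Cp Y) (Idm U)) (Cm (Tm (Cm g \<nu>') (Idm U)) (Cp U)))
        = Cm (Tm g c') (Cm (Cp W) \<nu>')"
    proof -
      have "Cm (Tm (Idm Y) c) (Cm (Tm (Cp Y) (Idm U)) (Cm (Tm (Cm g \<nu>') (Idm U)) (Cp U)))
          = Cm (Tm (Idm Y) c) (Cm (Cp Y) (Cm g \<nu>'))"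
        using T_Ur[OF cpY] T_Ur[OF gnu] cp_U id_r[OF gnu] by simp
      also have "\<dots> = Cm (Tm (Idm Y) c) (Cm (Tm g g) (Cm (Cp W) \<nu>'))"
        using cassoc[OF nu'h gh cpY] gdet' cassoc[OF nu'h cpW gg] by simp
      also have "\<dots> = Cm (Tm g c') (Cm (Cp W) \<nu>')"
        using cassoc[OF cpnu gg iYc] inter[OF gh iY gh ch] id_l[OF gh] cg by simp
      finally show ?thesis .
    qed
    have cQ: "is_cond2 M U A Y fQ c"
      unfolding is_cond2_def is_cond1_def using ch oY LHS RHS s2 by (simp add: obs)
    have val: "Cm c (Tm s (Tm s p)) = Cm c' (Tm s p)"
    proof -
      have "Cm (Dl X) s = Idm U" using to_U[OF comp_hom[OF sh dlX]] dl_U by simp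
      hence "Cm (Tm (Dl X) (Idm W)) (Tm s (Tm s p)) = Tm s p"
        using inter[OF sh dlX sph iW] id_l[OF sph] T_Ul[OF sph] by simp
      thus ?thesis unfolding c_def using cassoc[OF ssph dliW c'h] by simp
    qed
    show ?thesis using cQ c2 val by blast
  qed
  show ?thesis unfolding state_equiv_def
    using EQ conds unfolding fQ_def g_def Y_def W_def mP by auto
qed


end

theorem mainTheorem8:
  fixes M :: "('o, 'm) mcat" and X :: 'o and s :: 'm
  assumes "markov_category M"
    and "has_conditionals M"
    and "precise_supports M"
    and "X \<in> Ob M"
    and "deterministic M (unito M) X s"
  shows "obs_approx M
           (obs_comp M
              (obs_comp M (cond_eff M X s) (obs_tensor M (cond_eff M X s) (obs_id M X)))
              (obs_J M X (otens M X X) (cpy M X)))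
           (cond_eff M X s)"
proof -
  interpret MC M using assms(1) by unfold_locales
  note oX = assms(4) and ds = assms(5)
  have sh: "s \<in> Hm U X" using ds unfolding deterministic_def by auto
  show ?thesis unfolding obs_approx_def
  proof (intro ballI allI impI)
    fix A \<Psi> assume oA: "A \<in> Ob M" and H: "is_obs M \<Psi> \<and> obs_dom \<Psi> = U \<and>
      obs_cod \<Psi> = Ot A (obs_dom (obs_comp M
              (obs_comp M (cond_eff M X s) (obs_tensor M (cond_eff M X s) (obs_id M X)))
              (obs_J M X (otens M X X) (cpy M X))))"
    define K where "K = obs_K \<Psi>"
    define \<psi> where "\<psi> = obs_f \<Psi>"
    define p where "p = obs_o \<Psi>"
    have oK: "K \<in> Ob M" and psi: "\<psi> \<in> Hm U (Ot A (Ot X K))" and dp: "deterministic M U K p"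
      using H oA oX unfolding is_obs_def K_def \<psi>_def p_def obs_comp_def obs_J_def
      by (auto simp: obs)
    show "state_equiv M
          (obs_comp M (obs_tensor M (obs_id M A) (obs_comp M
              (obs_comp M (cond_eff M X s) (obs_tensor M (cond_eff M X s) (obs_id M X)))
              (obs_J M X (otens M X X) (cpy M X)))) \<Psi>)
          (obs_comp M (obs_tensor M (obs_id M A) (cond_eff M X s)) \<Psi>)"
    proof -
      have ph: "p \<in> Hm U K" using dp unfolding deterministic_def by auto
      have swXX: "Sw X X \<in> Hm (Ot X X) (Ot X X)" using sw_hom oX by auto
      have cpX: "Cp X \<in> Hm X (Ot X X)" using cp_hom oX by auto
      have iA: "Idm A \<in> Hm A A" using id_hom oA by auto
      have iK: "Idm K \<in> Hm K K" using id_hom oK by auto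
      have iAcp: "Tm (Idm A) (Cp X) \<in> Hm (Ot A X) (Ot A (Ot X X))" using T_hom[OF iA cpX] .
      have ss: "Tm s s \<in> Hm U (Ot X X)" using T_hom[OF sh sh] oX by (simp add: obs)
      have d: "obs_dom \<Psi> = U" using H by simp
      have e1: "Cm (Tm (Cm (Idm (Ot A (Ot X X)))
                       (Tm (Idm A)
                         (Cm (Tm (Cm (Idm (Ot X X))
                                   (Cm (Tm (Tm (Idm U) (Sw X X)) (Idm U))
                                     (Idm (Ot X X))))
                               (Idm U))
                           (Cp X))))
                   (Idm K)) \<psi> = Cm (Tm (Idm A) (Tm (Cp X) (Idm K))) \<psi>"
        using T_Ul[OF swXX] T_Ur[OF swXX] id_r[OF swXX] id_l[OF swXX] cocomm[OF oX] id_l[OF iAcp]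
          T_assoc[OF iA cpX iK] by simp
      have e2: "Tm (Tm (Idm U) (Tm (Tm s (Tm s (Idm U))) (Idm U))) p = Tm s (Tm s p)"
        using T_Ur[OF sh] T_Ur[OF ss] T_Ul[OF ss] T_assoc[OF sh sh ph] by simp
      have e3: "Cm (Tm (Cm (Idm (Ot A X)) (Idm (Ot A X))) (Idm K)) \<psi> = \<psi>"
        using id_l[OF id_hom[OF O_ob[OF oA oX]]] T_id[OF O_ob[OF oA oX] oK] oA oX oK
          id_l[OF psi] by (simp add: obs)
      have e4: "Tm (Tm (Idm U) s) p = Tm s p" using T_Ul[OF sh] by simp
      show ?thesis
        unfolding obs_comp_def obs_tensor_def obs_id_def cond_eff_def obs_J_def
        using oA oX oK sh core[OF assms(2) assms(3) oA oX oK psi ds dp]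
        by (simp add: obs swUU T_id_U T_U_id T_id K_def[symmetric] \<psi>_def[symmetric]
             p_def[symmetric] d e1 e2 e3 e4)
    qed
  qed
qed

end
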